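(* If $G$ is a $2$-degenerate graph with maximum degree $\Delta(G) \ge 2$, then $\chi_s'(G) \le 6\Delta(G) - 7$.
   Context: All graphs are finite and simple. A graph is $2$-degenerate if every subgraph of it has a vertex of degree at most $2$. A strong edge coloring of $G$ is an assignment of colors to the edges of $G$ such that every path with three edges receives three distinct colors; equivalently, any two distinct edges that share an endpoint, or whose endpoints are joined by an edge, receive different colors. The strong chromatic index $\chi_s'(G)$ is the minimum number of colors in a strong edge coloring of $G$. *)

theory Defs
  imports Main
begin

definition simple_graph :: "'a set \<Rightarrow> 'a set set \<Rightarrow> bool" where
  "simple_graph V E \<longleftrightarrow> finite V \<and> (\<forall>e\<in>E. e \<subseteq> V \<and> card e = 2)"

definition degree :: "'a set set \<Rightarrow> 'a \<Rightarrow> nat" where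
  "degree E v = card {e\<in>E. v \<in> e}"

definition max_degree :: "'a set \<Rightarrow> 'a set set \<Rightarrow> nat" where
  "max_degree V E = (if V = {} then 0 else Max (degree E ` V))"

definition two_degenerate :: "'a set \<Rightarrow> 'a set set \<Rightarrow> bool" where
  "two_degenerate V E \<longleftrightarrow>
     (\<forall>V' E'. V' \<subseteq> V \<and> E' \<subseteq> E \<and> (\<forall>e\<in>E'. e \<subseteq> V') \<and> V' \<noteq> {}
        \<longrightarrow> (\<exists>v\<in>V'. degree E' v \<le> 2))"

definition strong_edge_coloring :: "'a set set \<Rightarrow> ('a set \<Rightarrow> nat) \<Rightarrow> bool" where
  "strong_edge_coloring E c \<longleftrightarrow>
     (\<forall>e\<in>E. \<forall>f\<in>E. e \<noteq> f \<and>
        (e \<inter> f \<noteq> {} \<or> (\<exists>u\<in>e. \<exists>w\<in>f. {u, w} \<in> E)) \<longrightarrow> c e \<noteq> c f)"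

definition strong_chromatic_index :: "'a set set \<Rightarrow> nat" where
  "strong_chromatic_index E =
     (LEAST k. \<exists>c. strong_edge_coloring E c \<and> card (c ` E) = k)"

end

theory Submission imports Defs begin

definition outn :: "'a set set \<Rightarrow> ('a \<Rightarrow> nat) \<Rightarrow> 'a \<Rightarrow> 'a set" where
  "outn E r x = {y. {x,y} \<in> E \<and> r x < r y}"
definition inn :: "'a set set \<Rightarrow> ('a \<Rightarrow> nat) \<Rightarrow> 'a \<Rightarrow> 'a set" where
  "inn E r x = {y. {x,y} \<in> E \<and> r y < r x}"
definition conf :: "'a set set \<Rightarrow> 'a set \<Rightarrow> 'a set \<Rightarrow> bool" where
  "conf E e f \<longleftrightarrow> e \<inter> f \<noteq> {} \<or> (\<exists>u\<in>e. \<exists>w\<in>f. {u,w} \<in> E)"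

lemma conf_sym: "conf E e f = conf E f e"
  unfolding conf_def by (metis inf_commute insert_commute)

lemma edge_in_V: "simple_graph V E \<Longrightarrow> {x,y} \<in> E \<Longrightarrow> x \<in> V \<and> y \<in> V \<and> x \<noteq> y"
  unfolding simple_graph_def by (auto simp: insert_absorb2)

lemma finE: "simple_graph V E \<Longrightarrow> finite E"
  unfolding simple_graph_def by (meson Pow_iff finite_Pow_iff finite_subset subsetI)

lemma two_elems: "card f = 2 \<Longrightarrow> a \<in> f \<Longrightarrow> b \<in> f \<Longrightarrow> a \<noteq> b \<Longrightarrow> f = {a,b}"
  by (auto simp: card_2_iff)

lemma edge_form: "simple_graph V E \<Longrightarrow> f \<in> E \<Longrightarrow> \<exists>a b. f = {a,b} \<and> a \<noteq> b"
  unfolding simple_graph_def by (auto simp: card_2_iff)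

lemma nbr_finite: "simple_graph V E \<Longrightarrow> finite {y. {x,y} \<in> E}"
proof -
  assume sg: "simple_graph V E"
  have "{y. {x,y} \<in> E} \<subseteq> V" using edge_in_V[OF sg] by auto
  moreover have "finite V" using sg by (simp add: simple_graph_def)
  ultimately show ?thesis by (rule finite_subset)
qed

lemma nbr_card: assumes sg: "simple_graph V E" shows "card {y. {x,y} \<in> E} = degree E x"
proof -
  have "bij_betw (\<lambda>y. {x,y}) {y. {x,y} \<in> E} {e\<in>E. x \<in> e}"
  proof (rule bij_betwI')
    fix y z assume "y \<in> {y. {x,y} \<in> E}" "z \<in> {y. {x,y} \<in> E}"
    then show "({x,y} = {x,z}) = (y = z)" by (auto simp: doubleton_eq_iff)
  next
    fix y assume "y \<in> {y. {x,y} \<in> E}" then show "{x,y} \<in> {e\<in>E. x \<in> e}" by auto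
  next
    fix e assume "e \<in> {e\<in>E. x \<in> e}"
    then obtain a b where "e = {a,b}" "a \<noteq> b" "e \<in> E" "x \<in> e" using edge_form[OF sg] by blast
    then show "\<exists>y\<in>{y. {x,y} \<in> E}. e = {x,y}" by (auto simp: insert_commute)
  qed
  then show ?thesis unfolding degree_def by (rule bij_betw_same_card)
qed

lemma out_in_card: assumes sg: "simple_graph V E"
  shows "card (outn E r x) + card (inn E r x) \<le> degree E x"
proof -
  have f: "finite {y. {x,y} \<in> E}" by (rule nbr_finite[OF sg])
  have "card (outn E r x) + card (inn E r x) = card (outn E r x \<union> inn E r x)"
    by (rule card_Un_disjoint[symmetric]) (use f in \<open>auto simp: outn_def inn_def elim: finite_subset[rotated]\<close>)
  also have "\<dots> \<le> card {y. {x,y} \<in> E}" by (rule card_mono[OF f]) (auto simp: outn_def inn_def)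
  finally show ?thesis using nbr_card[OF sg] by simp
qed

lemma outn_finite: "simple_graph V E \<Longrightarrow> finite (outn E r x)"
  by (rule finite_subset[OF _ nbr_finite]) (auto simp: outn_def)
lemma inn_finite: "simple_graph V E \<Longrightarrow> finite (inn E r x)"
  by (rule finite_subset[OF _ nbr_finite]) (auto simp: inn_def)


lemma sum_le_cm: "(\<And>i. i \<in> A \<Longrightarrow> f i \<le> (K::nat)) \<Longrightarrow> sum f A \<le> card A * K"
  using sum_bounded_above[of A f K] by simp

lemma count:
  assumes sg: "simple_graph V E" and inj: "inj_on r V"
    and out2: "\<forall>x\<in>V. card (outn E r x) \<le> 2"
    and deg: "\<forall>x\<in>V. degree E x \<le> D" and D2: "D \<ge> 2"
    and eE: "{u,v} \<in> E" and ruv: "r u < r v"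
  shows "card {f\<in>E. f \<noteq> {u,v} \<and> conf E {u,v} f \<and> (\<exists>b\<in>f. r v \<le> r b)} \<le> 6*D - 8"
proof -
  let ?S = "{f\<in>E. f \<noteq> {u,v} \<and> conf E {u,v} f \<and> (\<exists>b\<in>f. r v \<le> r b)}"
  define A1 where "A1 = {f\<in>E. v \<in> f} - {{u,v}}"
  define A2 where "A2 = (\<Union>w\<in>outn E r u - {v}. {f\<in>E. w \<in> f})"
  define A3 where "A3 = (\<Union>y\<in>inn E r u. (\<lambda>z. {y,z}) ` (outn E r y - {u}))"
  define A4 where "A4 = (\<Union>x\<in>outn E r v. {f\<in>E. x \<in> f} - {{v,x}})"
  define A5 where "A5 = (\<Union>y\<in>inn E r v - {u}. (\<lambda>z. {y,z}) ` (outn E r y - {v}))"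
  have uV: "u \<in> V" and vV: "v \<in> V" and uv: "u \<noteq> v" using edge_in_V[OF sg eE] by auto
  have finE: "finite E" by (rule finE[OF sg])
  have cardE: "\<And>f. f \<in> E \<Longrightarrow> card f = 2" using sg by (auto simp: simple_graph_def)
  have sub: "?S \<subseteq> A1 \<union> A2 \<union> A3 \<union> A4 \<union> A5"
  proof
    fix f assume fS: "f \<in> ?S"
    then have fE: "f \<in> E" and fne: "f \<noteq> {u,v}" and cf: "conf E {u,v} f"
      and "\<exists>b\<in>f. r v \<le> r b" by auto
    then obtain b where bf: "b \<in> f" and rb: "r v \<le> r b" by blast
    have c2: "card f = 2" using cardE[OF fE] .
    have fV: "\<And>x. x \<in> f \<Longrightarrow> x \<in> V" using sg fE by (auto simp: simple_graph_def)
    show "f \<in> A1 \<union> A2 \<union> A3 \<union> A4 \<union> A5"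
    proof (cases "v \<in> f")
      case True then show ?thesis using fE fne by (auto simp: A1_def)
    next
      case vnf: False
      show ?thesis
      proof (cases "u \<in> f")
        case True
        have "b \<noteq> u" using rb ruv by auto
        then have fub: "f = {u,b}" using two_elems[OF c2 True bf] by simp
        have "b \<in> outn E r u - {v}" using fub fE rb ruv vnf bf by (auto simp: outn_def)
        then have "f \<in> A2" using fE bf unfolding A2_def by blast
        then show ?thesis by blast
      next
        case unf: False
        have "{u,v} \<inter> f = {}" using unf vnf by auto
        then obtain p y where p: "p \<in> {u,v}" and yf: "y \<in> f" and py: "{p,y} \<in> E"
          using cf by (auto simp: conf_def)
        have yV: "y \<in> V" using fV yf .
        show ?thesis
        proof (cases "p = u")
          case True
          have yu: "y \<noteq> u" using yf unf by auto
          have "r y \<noteq> r u" using inj yV uV yu by (auto simp: inj_on_def)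
          then consider "r u < r y" | "r y < r u" by linarith
          then show ?thesis
          proof cases
            case 1
            have "y \<in> outn E r u - {v}" using 1 py True yf vnf by (auto simp: outn_def)
            then have "f \<in> A2" using fE yf unfolding A2_def by blast
            then show ?thesis by blast
          next
            case 2
            have yin: "y \<in> inn E r u" using 2 py True by (auto simp: inn_def)
            have "b \<noteq> y" using 2 rb ruv by auto
            then have fyb: "f = {y,b}" using two_elems[OF c2 yf bf] by simp
            have "b \<in> outn E r y - {u}" using fyb fE rb ruv 2 unf bf by (auto simp: outn_def)
            then have "f \<in> A3" using yin fyb unfolding A3_def by blast
            then show ?thesis by blast
          qed
        next
          case False
          then have pv: "p = v" using p by auto
          have yv: "y \<noteq> v" using yf vnf by auto
          have "r y \<noteq> r v" using inj yV vV yv by (auto simp: inj_on_def)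
          then consider "r v < r y" | "r y < r v" by linarith
          then show ?thesis
          proof cases
            case 1
            have "y \<in> outn E r v" using 1 py pv by (auto simp: outn_def)
            moreover have "f \<noteq> {v,y}" using vnf by auto
            ultimately have "f \<in> A4" using fE yf unfolding A4_def by blast
            then show ?thesis by blast
          next
            case 2
            have yu: "y \<noteq> u" using yf unf by auto
            have yin: "y \<in> inn E r v - {u}" using 2 py pv yu by (auto simp: inn_def)
            have "b \<noteq> y" using 2 rb by auto
            then have fyb: "f = {y,b}" using two_elems[OF c2 yf bf] by simp
            have "b \<in> outn E r y - {v}" using fyb fE rb 2 vnf bf by (auto simp: outn_def)
            then have "f \<in> A5" using yin fyb unfolding A5_def by blast
            then show ?thesis by blast
          qed
        qed
      qed
    qed
  qed
  have subE: "A1 \<union> A2 \<union> A3 \<union> A4 \<union> A5 \<subseteq> E"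
    unfolding A1_def A2_def A3_def A4_def A5_def by (auto simp: outn_def)
  have finU: "finite (A1 \<union> A2 \<union> A3 \<union> A4 \<union> A5)" using finite_subset[OF subE finE] .
  have "card ?S \<le> card (A1 \<union> A2 \<union> A3 \<union> A4 \<union> A5)" by (rule card_mono[OF finU sub])
  also have "\<dots> \<le> card A1 + card A2 + card A3 + card A4 + card A5"
    by (meson add_mono card_Un_le le_refl order_trans)
  finally have tot: "card ?S \<le> card A1 + card A2 + card A3 + card A4 + card A5" .
  define ou where "ou = card (outn E r u)"
  define iu where "iu = card (inn E r u)"
  define ov where "ov = card (outn E r v)"
  define iv where "iv = card (inn E r v)"
  have finO: "\<And>x. finite (outn E r x)" by (rule outn_finite[OF sg])
  have finI: "\<And>x. finite (inn E r x)" by (rule inn_finite[OF sg])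
  have vou: "v \<in> outn E r u" using eE ruv by (auto simp: outn_def)
  have uiv: "u \<in> inn E r v" using eE ruv by (auto simp: inn_def insert_commute)
  have ouiu: "ou + iu \<le> D" using out_in_card[OF sg, of r u] deg uV ou_def iu_def by fastforce
  have oviv: "ov + iv \<le> D" using out_in_card[OF sg, of r v] deg vV ov_def iv_def by fastforce
  have ou1: "ou \<ge> 1" using vou finO[of u] ou_def by (metis One_nat_def Suc_leI card_gt_0_iff empty_iff)
  have ou2: "ou \<le> 2" using out2 uV ou_def by auto
  have ov2: "ov \<le> 2" using out2 vV ov_def by auto
  have iv1: "iv \<ge> 1" using uiv finI[of v] iv_def by (metis One_nat_def Suc_leI card_gt_0_iff empty_iff)
  have degle: "\<And>x. x \<in> V \<Longrightarrow> card {f\<in>E. x \<in> f} \<le> D" using deg by (auto simp: degree_def)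
  have outV: "\<And>x y. y \<in> outn E r x \<Longrightarrow> y \<in> V \<and> {x,y} \<in> E"
    using edge_in_V[OF sg] by (auto simp: outn_def)
  have c1: "card A1 \<le> D - 1"
  proof -
    have "card A1 = card {f\<in>E. v \<in> f} - 1" unfolding A1_def
      by (rule card_Diff_singleton) (use eE in auto)
    then show ?thesis using degle[OF vV] by linarith
  qed
  have c2: "card A2 \<le> (ou - 1) * D"
  proof -
    have "card A2 \<le> (\<Sum>w\<in>outn E r u - {v}. card {f\<in>E. w \<in> f})"
      unfolding A2_def by (rule card_UN_le) (use finO in auto)
    also have "\<dots> \<le> card (outn E r u - {v}) * D"
      by (rule sum_le_cm) (use degle outV in auto)
    also have "card (outn E r u - {v}) = ou - 1" using vou finO ou_def by simp
    finally show ?thesis .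
  qed
  have c3: "card A3 \<le> iu"
  proof -
    have "card A3 \<le> (\<Sum>y\<in>inn E r u. card ((\<lambda>z. {y,z}) ` (outn E r y - {u})))"
      unfolding A3_def by (rule card_UN_le) (use finI in auto)
    also have "\<dots> \<le> card (inn E r u) * 1"
    proof (rule sum_le_cm)
      fix y assume yi: "y \<in> inn E r u"
      then have "u \<in> outn E r y" by (auto simp: inn_def outn_def insert_commute)
      moreover have "y \<in> V" using yi edge_in_V[OF sg] by (auto simp: inn_def)
      ultimately have "card (outn E r y - {u}) \<le> 1" using out2 finO[of y] by auto
      then show "card ((\<lambda>z. {y,z}) ` (outn E r y - {u})) \<le> 1"
        using card_image_le[of "outn E r y - {u}" "\<lambda>z. {y,z}"] finO[of y] by simp
    qed
    finally show ?thesis using iu_def by simp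
  qed
  have c4: "card A4 \<le> ov * (D - 1)"
  proof -
    have "card A4 \<le> (\<Sum>x\<in>outn E r v. card ({f\<in>E. x \<in> f} - {{v,x}}))"
      unfolding A4_def by (rule card_UN_le) (use finO in auto)
    also have "\<dots> \<le> card (outn E r v) * (D - 1)"
    proof (rule sum_le_cm)
      fix x assume xo: "x \<in> outn E r v"
      have "card ({f\<in>E. x \<in> f} - {{v,x}}) = card {f\<in>E. x \<in> f} - 1"
        by (rule card_Diff_singleton) (use outV[OF xo] in auto)
      then show "card ({f\<in>E. x \<in> f} - {{v,x}}) \<le> D - 1" using degle outV[OF xo] by fastforce
    qed
    finally show ?thesis using ov_def by simp
  qed
  have c5: "card A5 \<le> iv - 1"
  proof -
    have "card A5 \<le> (\<Sum>y\<in>inn E r v - {u}. card ((\<lambda>z. {y,z}) ` (outn E r y - {v})))"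
      unfolding A5_def by (rule card_UN_le) (use finI in auto)
    also have "\<dots> \<le> card (inn E r v - {u}) * 1"
    proof (rule sum_le_cm)
      fix y assume yi: "y \<in> inn E r v - {u}"
      then have "v \<in> outn E r y" by (auto simp: inn_def outn_def insert_commute)
      moreover have "y \<in> V" using yi edge_in_V[OF sg] by (auto simp: inn_def)
      ultimately have "card (outn E r y - {v}) \<le> 1" using out2 finO[of y] by auto
      then show "card ((\<lambda>z. {y,z}) ` (outn E r y - {v})) \<le> 1"
        using card_image_le[of "outn E r y - {v}" "\<lambda>z. {y,z}"] finO[of y] by simp
    qed
    also have "card (inn E r v - {u}) = iv - 1" using uiv finI iv_def by simp
    finally show ?thesis by simp
  qed
  have arith: "(D - 1) + (ou - 1) * D + iu + ov * (D - 1) + (iv - 1) \<le> 6*D - 8"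
  proof -
    have "ou = 1 \<or> ou = 2" using ou1 ou2 by auto
    moreover have "ov = 0 \<or> ov = 1 \<or> ov = 2" using ov2 by auto
    ultimately show ?thesis using ouiu oviv iv1 D2 by (auto simp: algebra_simps)
  qed
  show ?thesis using tot c1 c2 c3 c4 c5 arith by linarith
qed


lemma rank_exists:
  assumes sg: "simple_graph V E" and td: "two_degenerate V E"
  shows "W \<subseteq> V \<Longrightarrow> \<exists>r::'a\<Rightarrow>nat. inj_on r W \<and> (\<forall>x\<in>W. card {y\<in>W. {x,y} \<in> E \<and> r x < r y} \<le> 2)"
proof (induction "card W" arbitrary: W rule: less_induct)
  case less
  have finV: "finite V" using sg by (simp add: simple_graph_def)
  have finW: "finite W" using less.prems finV finite_subset by blast
  show ?case
  proof (cases "W = {}")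
    case True then show ?thesis by (intro exI[of _ "\<lambda>_. 0::nat"]) simp
  next
    case False
    define E' where "E' = {e\<in>E. e \<subseteq> W}"
    obtain x where xW: "x \<in> W" and dx: "degree E' x \<le> 2"
    proof -
      have "E' \<subseteq> E" "\<forall>e\<in>E'. e \<subseteq> W" unfolding E'_def by auto
      then have "\<exists>x\<in>W. degree E' x \<le> 2"
        using td less.prems False unfolding two_degenerate_def by blast
      then show ?thesis using that by blast
    qed
    have finE: "finite E" by (rule finE[OF sg])
    have nx: "card {y\<in>W. {x,y} \<in> E} \<le> 2"
    proof -
      have "card {y\<in>W. {x,y} \<in> E} \<le> card {e\<in>E'. x \<in> e}"
      proof (rule card_inj_on_le[where f="\<lambda>y. {x,y}"])
        show "inj_on (\<lambda>y. {x,y}) {y\<in>W. {x,y} \<in> E}" by (auto simp: inj_on_def doubleton_eq_iff)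
        show "(\<lambda>y. {x,y}) ` {y\<in>W. {x,y} \<in> E} \<subseteq> {e\<in>E'. x \<in> e}" using xW by (auto simp: E'_def)
        show "finite {e\<in>E'. x \<in> e}" using finE by (auto simp: E'_def)
      qed
      then show ?thesis using dx by (simp add: degree_def)
    qed
    have "card (W - {x}) < card W" using finW xW by (meson card_Diff1_less)
    moreover have "W - {x} \<subseteq> V" using less.prems by auto
    ultimately obtain r' :: "'a \<Rightarrow> nat" where inj': "inj_on r' (W - {x})"
      and b': "\<forall>z\<in>W - {x}. card {y\<in>W - {x}. {z,y} \<in> E \<and> r' z < r' y} \<le> 2"
      using less.hyps[of "W - {x}"] by blast
    define r where "r = (\<lambda>y. if y = x then 0 else Suc (r' y))"
    have "inj_on r W" using inj' unfolding r_def inj_on_def by auto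
    moreover have "\<forall>z\<in>W. card {y\<in>W. {z,y} \<in> E \<and> r z < r y} \<le> 2"
    proof
      fix z assume zW: "z \<in> W"
      show "card {y\<in>W. {z,y} \<in> E \<and> r z < r y} \<le> 2"
      proof (cases "z = x")
        case True
        have "card {y\<in>W. {z,y} \<in> E \<and> r z < r y} \<le> card {y\<in>W. {x,y} \<in> E}"
          by (rule card_mono) (use finW True in auto)
        then show ?thesis using nx by simp
      next
        case False
        have "{y\<in>W. {z,y} \<in> E \<and> r z < r y} = {y\<in>W - {x}. {z,y} \<in> E \<and> r' z < r' y}"
          using False unfolding r_def by auto
        then show ?thesis using b' zW False by simp
      qed
    qed
    ultimately show ?thesis by blast
  qed
qed

lemma coloring:
  assumes sg: "simple_graph V E" and inj: "inj_on r V"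
    and out2: "\<forall>x\<in>V. card (outn E r x) \<le> 2"
    and deg: "\<forall>x\<in>V. degree E x \<le> D" and D2: "D \<ge> 2"
  shows "F \<subseteq> E \<Longrightarrow> \<exists>c. (\<forall>f\<in>F. c f < 6*D - 7) \<and> (\<forall>e\<in>F. \<forall>f\<in>F. e \<noteq> f \<and> conf E e f \<longrightarrow> c e \<noteq> c f)"
proof (induction "card F" arbitrary: F rule: less_induct)
  case less
  have finE: "finite E" by (rule finE[OF sg])
  have finF: "finite F" using less.prems finE finite_subset by blast
  show ?case
  proof (cases "F = {}")
    case True then show ?thesis by (intro exI[of _ "\<lambda>_. 0::nat"]) simp
  next
    case False
    define hr where "hr = (\<lambda>f. Max (r ` f))"
    define m where "m = Min (hr ` F)"
    have "m \<in> hr ` F" using finF False m_def by simp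
    then obtain e where eF: "e \<in> F" and hre: "hr e = m" by blast
    have minf: "\<And>f. f \<in> F \<Longrightarrow> hr e \<le> hr f" using hre m_def finF by simp
    have eE: "e \<in> E" using eF less.prems by auto
    obtain a b where eab: "e = {a,b}" and ab: "a \<noteq> b" using edge_form[OF sg eE] by blast
    have "a \<in> V" "b \<in> V" using edge_in_V[OF sg] eE eab by auto
    then have "r a \<noteq> r b" using inj ab by (auto simp: inj_on_def)
    then have "\<exists>u v. e = {u,v} \<and> r u < r v"
    proof (cases "r a < r b")
      case True then show ?thesis using eab by blast
    next
      case False
      then have "r b < r a" using \<open>r a \<noteq> r b\<close> by linarith
      then show ?thesis using eab insert_commute by blast
    qed
    then obtain u v where euv: "e = {u,v}" and ruv: "r u < r v" by blast
    have hrv: "hr e = r v" using euv ruv unfolding hr_def by (simp add: max_def)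
    have big: "\<And>f. f \<in> F \<Longrightarrow> \<exists>b\<in>f. r v \<le> r b"
    proof -
      fix f assume fF: "f \<in> F"
      then have fE: "f \<in> E" using less.prems by auto
      obtain a' b' where "f = {a',b'}" using edge_form[OF sg fE] by blast
      then have fne: "f \<noteq> {}" "finite f" by auto
      have "Max (r ` f) \<in> r ` f" using fne by simp
      moreover have "r v \<le> Max (r ` f)" using minf[OF fF] hrv hr_def by simp
      ultimately show "\<exists>b\<in>f. r v \<le> r b" by auto
    qed
    have "card (F - {e}) < card F" using finF eF by (meson card_Diff1_less)
    moreover have "F - {e} \<subseteq> E" using less.prems by auto
    ultimately obtain c' where c'b: "\<forall>f\<in>F - {e}. c' f < 6*D - 7"
      and c'p: "\<forall>e'\<in>F - {e}. \<forall>f\<in>F - {e}. e' \<noteq> f \<and> conf E e' f \<longrightarrow> c' e' \<noteq> c' f"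
      using less.hyps[of "F - {e}"] by blast
    define C where "C = {f\<in>F - {e}. conf E e f}"
    have "C \<subseteq> {f\<in>E. f \<noteq> {u,v} \<and> conf E {u,v} f \<and> (\<exists>b\<in>f. r v \<le> r b)}"
      using less.prems big euv unfolding C_def by auto
    then have "card C \<le> card {f\<in>E. f \<noteq> {u,v} \<and> conf E {u,v} f \<and> (\<exists>b\<in>f. r v \<le> r b)}"
      by (rule card_mono[rotated]) (use finE in auto)
    also have "\<dots> \<le> 6*D - 8" by (rule count[OF sg inj out2 deg D2]) (use eE euv ruv in auto)
    finally have cC: "card C \<le> 6*D - 8" .
    have finC: "finite C" using finF C_def by auto
    have "\<not> {..<6*D - 7} \<subseteq> c' ` C"
    proof
      assume "{..<6*D - 7} \<subseteq> c' ` C"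
      then have "card {..<6*D - 7} \<le> card (c' ` C)" by (rule card_mono[rotated]) (use finC in auto)
      also have "\<dots> \<le> card C" by (rule card_image_le[OF finC])
      finally show False using cC D2 by simp
    qed
    then obtain k where kK: "k < 6*D - 7" and kC: "k \<notin> c' ` C" by auto
    define c where "c = c'(e := k)"
    have "\<forall>f\<in>F. c f < 6*D - 7" using c'b kK unfolding c_def by auto
    moreover have "\<forall>e1\<in>F. \<forall>f1\<in>F. e1 \<noteq> f1 \<and> conf E e1 f1 \<longrightarrow> c e1 \<noteq> c f1"
    proof (intro ballI impI)
      fix e1 f1 assume e1: "e1 \<in> F" and f1: "f1 \<in> F" and h: "e1 \<noteq> f1 \<and> conf E e1 f1"
      show "c e1 \<noteq> c f1"
      proof (cases "e1 = e")
        case True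
        then have "f1 \<in> C" using h f1 C_def by auto
        then show ?thesis using True h kC unfolding c_def by force
      next
        case F1: False
        show ?thesis
        proof (cases "f1 = e")
          case True
          then have "e1 \<in> C" using h e1 C_def conf_sym by auto
          then show ?thesis using True h kC unfolding c_def by force
        next
          case False
          then show ?thesis using F1 c'p e1 f1 h unfolding c_def by auto
        qed
      qed
    qed
    ultimately show ?thesis by blast
  qed
qed

theorem corollary2:
  fixes V :: "'a set" and E :: "'a set set"
  assumes "simple_graph V E"
    and "two_degenerate V E"
    and "max_degree V E \<ge> 2"
  shows "strong_chromatic_index E \<le> 6 * max_degree V E - 7"
proof -
  note sg = assms(1)
  define D where "D = max_degree V E"
  have D2: "D \<ge> 2" using assms(3) D_def by simp
  have finV: "finite V" using sg by (simp add: simple_graph_def)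
  have Vne: "V \<noteq> {}" using D2 D_def by (auto simp: max_degree_def)
  have deg: "\<forall>x\<in>V. degree E x \<le> D" using finV Vne by (auto simp: D_def max_degree_def)
  obtain r :: "'a \<Rightarrow> nat" where inj: "inj_on r V" and rb: "\<forall>x\<in>V. card {y\<in>V. {x,y} \<in> E \<and> r x < r y} \<le> 2"
    using rank_exists[OF sg assms(2), of V] by auto
  have "\<And>x. outn E r x = {y\<in>V. {x,y} \<in> E \<and> r x < r y}"
    using edge_in_V[OF sg] by (auto simp: outn_def)
  then have out2: "\<forall>x\<in>V. card (outn E r x) \<le> 2" using rb by simp
  obtain c where cb: "\<forall>f\<in>E. c f < 6*D - 7"
    and cp: "\<forall>e\<in>E. \<forall>f\<in>E. e \<noteq> f \<and> conf E e f \<longrightarrow> c e \<noteq> c f"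
    using coloring[OF sg inj out2 deg D2, of E] by blast
  have sec: "strong_edge_coloring E c" using cp unfolding strong_edge_coloring_def conf_def by blast
  have "card (c ` E) \<le> card {..<6*D - 7}" by (rule card_mono) (use cb in auto)
  then have cc: "card (c ` E) \<le> 6*D - 7" by simp
  have "strong_chromatic_index E \<le> card (c ` E)"
    unfolding strong_chromatic_index_def by (rule Least_le) (use sec in blast)
  then show ?thesis using cc D_def by simp
qed

end
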